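(* Let $p$ be a prime and $Q\in\mathbb{Q}_p[X_1,\dots,X_n]$ any quadratic form. Then the following are equivalent: (i) $R(Q(\mathbb{N}^n))$ is dense in $\mathbb{Q}_p$; (ii) $R(Q(\mathbb{Z}^n))$ is dense in $\mathbb{Q}_p$; (iii) $R(Q(\mathbb{Z}_p^n))$ is dense in $\mathbb{Q}_p$.
   Context: $\mathbb{N}$ denotes the nonnegative integers, $\mathbb{Z}_p$ the $p$-adic integers, and $\mathbb{Q}_p$ carries the $p$-adic topology. A quadratic form is a homogeneous polynomial of degree two, not all coefficients zero. For a subset $A$ of a field, $R(A)=\{a/b: a,b\in A,\ b\neq 0\}$. For $S\subseteq\mathbb{Q}_p^n$, $Q(S)=\{Q(\mathbf{x}):\mathbf{x}\in S\}$. *)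

theory Defs
  imports Complex_Main "HOL-Computational_Algebra.Primes"
begin

definition rat_padic_val :: "nat \<Rightarrow> rat \<Rightarrow> int" where
  "rat_padic_val p q =
     (let (a, b) = quotient_of q in
        int (multiplicity (int p) a) - int (multiplicity (int p) b))"

definition rat_padic_abs :: "nat \<Rightarrow> rat \<Rightarrow> real" where
  "rat_padic_abs p q = (if q = 0 then 0 else real p powr (- real_of_int (rat_padic_val p q)))"

text \<open>Q_p, characterised (uniquely up to isometric isomorphism) as the completion of Q
  w.r.t. the p-adic absolute value: a field K of characteristic 0 with an absolute value
  nv extending the p-adic absolute value on Q, complete, in which Q is dense.\<close>
definition is_Qp :: "nat \<Rightarrow> ('a::field_char_0 \<Rightarrow> real) \<Rightarrow> bool" where
  "is_Qp p nv \<longleftrightarrow>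
     (\<forall>x. nv x \<ge> 0) \<and> (\<forall>x. nv x = 0 \<longleftrightarrow> x = 0) \<and>
     (\<forall>x y. nv (x * y) = nv x * nv y) \<and>
     (\<forall>x y. nv (x + y) \<le> nv x + nv y) \<and>
     (\<forall>q. nv (of_rat q) = rat_padic_abs p q) \<and>
     (\<forall>X::nat \<Rightarrow> 'a. (\<forall>e>0. \<exists>N. \<forall>m\<ge>N. \<forall>k\<ge>N. nv (X m - X k) < e) \<longrightarrow>
          (\<exists>L. \<forall>e>0. \<exists>N. \<forall>k\<ge>N. nv (X k - L) < e)) \<and>
     (\<forall>y. \<forall>e>0. \<exists>q. nv (of_rat q - y) < e)"

definition is_quadratic_form :: "nat \<Rightarrow> (nat \<Rightarrow> nat \<Rightarrow> 'a::comm_ring_1) \<Rightarrow> bool" where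
  "is_quadratic_form n c \<longleftrightarrow> (\<exists>i j. i \<le> j \<and> j < n \<and> c i j \<noteq> 0)"

definition qf_eval :: "nat \<Rightarrow> (nat \<Rightarrow> nat \<Rightarrow> 'a::comm_ring_1) \<Rightarrow> (nat \<Rightarrow> 'a) \<Rightarrow> 'a" where
  "qf_eval n c x = (\<Sum>i<n. \<Sum>j\<in>{i..<n}. c i j * x i * x j)"

text \<open>A^n as functions on {0..<n} (values outside are irrelevant).\<close>
definition cart_pow :: "'a set \<Rightarrow> nat \<Rightarrow> (nat \<Rightarrow> 'a) set" where
  "cart_pow A n = {x. \<forall>i<n. x i \<in> A}"

definition ratio_set :: "'a::field set \<Rightarrow> 'a set" where
  "ratio_set A = {a / b | a b. a \<in> A \<and> b \<in> A \<and> b \<noteq> 0}"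

definition dense_wrt :: "('a::ab_group_add \<Rightarrow> real) \<Rightarrow> 'a set \<Rightarrow> bool" where
  "dense_wrt nv S \<longleftrightarrow> (\<forall>y. \<forall>e>0. \<exists>s\<in>S. nv (s - y) < e)"

end

theory Submission
  imports Defs
begin

context
  fixes p :: nat and nv :: "'a::field_char_0 \<Rightarrow> real"
  assumes Qp: "is_Qp p nv" and pp: "prime p"
begin

lemma nv_nonneg: "nv x \<ge> 0" using Qp unfolding is_Qp_def by blast
lemma nv_zero_iff: "nv x = 0 \<longleftrightarrow> x = 0" using Qp unfolding is_Qp_def by blast
lemma nv_mult: "nv (x*y) = nv x * nv y" using Qp unfolding is_Qp_def by blast
lemma nv_tri: "nv (x+y) \<le> nv x + nv y" using Qp unfolding is_Qp_def by blast
lemma nv_rat: "nv (of_rat q) = rat_padic_abs p q" using Qp unfolding is_Qp_def by blast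
lemma nv_dense: "e > 0 \<Longrightarrow> \<exists>q. nv (of_rat q - y) < e" using Qp unfolding is_Qp_def by blast

lemma nv_0: "nv 0 = 0" by (simp add: nv_zero_iff)

lemma nv_1: "nv 1 = 1"
proof -
  have "nv 1 = nv 1 * nv 1" using nv_mult[of 1 1] by simp
  moreover have "nv 1 \<noteq> 0" by (simp add: nv_zero_iff)
  ultimately show ?thesis by (metis mult_cancel_left1)
qed

lemma nv_m1: "nv (-1) = 1"
proof -
  have "nv (-1) * nv (-1) = 1" using nv_mult[of "-1" "-1"] nv_1 by simp
  then have "(nv (-1) - 1) * (nv (-1) + 1) = 0" by (simp add: algebra_simps)
  moreover have "nv (-1) + 1 > 0" using nv_nonneg[of "-1"] by simp
  ultimately show ?thesis by simp
qed

lemma nv_uminus: "nv (-x) = nv x"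
  using nv_mult[of "-1" x] nv_m1 by simp

lemma nv_sym: "nv (x - y) = nv (y - x)"
  by (metis minus_diff_eq nv_uminus)

lemma nv_diff: "nv (x - y) \<le> nv x + nv y"
  using nv_tri[of x "-y"] nv_uminus[of y] by simp

lemma nv_divide: "y \<noteq> 0 \<Longrightarrow> nv (x / y) = nv x / nv y"
proof -
  assume "y \<noteq> 0"
  then have "nv (x / y) * nv y = nv x" by (metis nv_mult nonzero_eq_divide_eq)
  moreover have "nv y \<noteq> 0" using \<open>y \<noteq> 0\<close> nv_zero_iff by simp
  ultimately show ?thesis by (simp add: field_simps)
qed

lemma nv_power: "nv (x ^ k) = nv x ^ k"
  by (induction k) (simp_all add: nv_1 nv_mult)

lemma nv_sum: "nv (sum f A) \<le> (\<Sum>i\<in>A. nv (f i))"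
proof (induction A rule: infinite_finite_induct)
  case (infinite A) then show ?case by (simp add: nv_0)
next
  case empty then show ?case by (simp add: nv_0)
next
  case (insert x F)
  then show ?case using nv_tri[of "f x" "sum f F"] by simp
qed

lemma p_gt1: "real p > 1" using pp prime_gt_1_nat by simp

lemma nv_of_int: "z \<noteq> 0 \<Longrightarrow> nv (of_int z) = real p powr (- real (multiplicity (int p) z))"
proof -
  assume z: "z \<noteq> 0"
  have "nv (of_int z) = nv (of_rat (of_int z))" by simp
  also have "\<dots> = rat_padic_abs p (of_int z)" by (rule nv_rat)
  also have "\<dots> = real p powr (- real (multiplicity (int p) z))"
    using z unfolding rat_padic_abs_def rat_padic_val_def by simp
  finally show ?thesis .
qed

lemma nv_int_le1: "nv (of_int z) \<le> 1"
proof (cases "z = 0")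
  case True then show ?thesis by (simp add: nv_0)
next
  case False
  have "1 \<le> real p powr (real (multiplicity (int p) z))"
    using p_gt1 by (intro ge_one_powr_ge_zero) auto
  then show ?thesis using nv_of_int[OF False] by (auto simp add: powr_minus_divide divide_le_eq_1)
qed

lemma nv_int_coprime: "\<not> int p dvd z \<Longrightarrow> nv (of_int z) = 1"
proof -
  assume h: "\<not> int p dvd z"
  then have "z \<noteq> 0" by auto
  then show ?thesis using nv_of_int[of z] not_dvd_imp_multiplicity_0[OF h] p_gt1 by simp
qed

lemma nv_p: "nv (of_nat p) = 1 / real p"
proof -
  have "int p \<noteq> 0" using p_gt1 by simp
  moreover have "\<not> is_unit (int p)"
  proof -
    have "prime (int p)" using pp by simp
    then show ?thesis using not_prime_unit by blast
  qed
  ultimately have "multiplicity (int p) (int p) = 1" by (rule multiplicity_self)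
  then show ?thesis using nv_of_int[of "int p"] p_gt1 by (simp add: powr_minus_divide)
qed

lemma nv_pN: "nv ((of_nat p :: 'a) ^ N) = (1 / real p) ^ N"
  by (simp add: nv_power nv_p)

lemma nat_dense:
  assumes x: "nv x \<le> 1" and e: "e > 0"
  shows "\<exists>k::nat. nv (of_nat k - x) < e"
proof -
  have "1 / real p < 1" using p_gt1 by simp
  then obtain N where N: "(1 / real p) ^ N < e / 4" using real_arch_pow_inv[of "e/4"] e by auto
  obtain q where q: "nv (of_rat q - x) < min (e/2) 1" using nv_dense[of "min (e/2) 1" x] e by auto
  obtain a b where qab: "quotient_of q = (a, b)" by (cases "quotient_of q") auto
  have bpos: "b > 0" using quotient_of_denom_pos[OF qab] .
  have cop: "coprime a b" using quotient_of_coprime[OF qab] .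
  have qeq: "(of_rat q :: 'a) = of_int a / of_int b"
    using quotient_of_div[OF qab] by (simp add: of_rat_divide)
  have B0: "(of_int b :: 'a) \<noteq> 0" using bpos by simp
  have "nv (of_rat q :: 'a) \<le> nv (of_rat q - x) + nv x"
    using nv_tri[of "of_rat q - x" x] by simp
  then have nvq: "nv (of_rat q :: 'a) < 2" using q x by simp
  have ndvd: "\<not> int p dvd b"
  proof
    assume "int p dvd b"
    then obtain b' where b': "b = int p * b'" by (auto elim: dvdE)
    have "\<not> int p dvd a"
    proof
      assume "int p dvd a"
      then have "\<bar>int p\<bar> = 1" using coprime_common_divisor_int[OF cop] \<open>int p dvd b\<close> by blast
      then show False using p_gt1 by simp
    qed
    then have na: "nv (of_int a :: 'a) = 1" by (rule nv_int_coprime)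
    have "nv (of_int b :: 'a) = nv (of_nat p) * nv (of_int b' :: 'a)"
      using b' nv_mult[of "of_nat p" "of_int b'"] by simp
    also have "\<dots> \<le> 1 / real p" using nv_int_le1[of b'] nv_p p_gt1 by (simp add: divide_right_mono)
    finally have nb: "nv (of_int b :: 'a) \<le> 1 / real p" .
    have nbpos: "nv (of_int b :: 'a) > 0" using B0 nv_nonneg nv_zero_iff
      by (metis less_eq_real_def)
    have "nv (of_rat q :: 'a) = 1 / nv (of_int b :: 'a)"
      using qeq nv_divide[OF B0, of "of_int a"] na by simp
    also have "\<dots> \<ge> real p" using nb nbpos p_gt1
      by (simp add: field_simps)
    finally have "nv (of_rat q :: 'a) \<ge> real p" .
    moreover have "real p \<ge> 2" using pp prime_ge_2_nat by simp
    ultimately show False using nvq by simp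
  qed
  then have nb1: "nv (of_int b :: 'a) = 1" by (rule nv_int_coprime)
  have "coprime (int p) b" using prime_imp_coprime[of "int p" b] pp ndvd by simp
  then have "coprime b (int p ^ N)" by (simp add: coprime_commute)
  then have "gcd b (int p ^ N) = 1" by (simp add: coprime_iff_gcd_eq_1)
  then obtain u v where uv: "u * b + v * int p ^ N = 1" using bezout_int[of b "int p ^ N"] by auto
  define P where "P = int p ^ N"
  have Ppos: "P > 0" using p_gt1 P_def by simp
  define w where "w = (a * u) div P"
  define k where "k = nat ((a * u) mod P)"
  have kk: "int k = a * u - P * w"
  proof -
    have "(a*u) mod P \<ge> 0" using Ppos by simp
    then have "int k = (a*u) mod P" unfolding k_def by simp
    also have "\<dots> = a * u - P * w" unfolding w_def by (metis minus_mult_div_eq_mod)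
    finally show ?thesis .
  qed
  have ofk: "(of_nat k :: 'a) = of_int a * of_int u - of_int P * of_int w"
    by (metis kk of_int_of_nat_eq of_int_diff of_int_mult)
  have uvK: "(of_int u :: 'a) * of_int b + of_int v * of_int P = 1"
    using uv unfolding P_def by (metis of_int_add of_int_mult of_int_1)
  have diff: "(of_rat q :: 'a) - of_nat k = of_int a * of_int v * of_int P / of_int b + of_int P * of_int w"
  proof -
    have "(of_rat q :: 'a) - of_nat k = of_int a / of_int b - of_int a * of_int u + of_int P * of_int w"
      using qeq ofk by simp
    also have "of_int a / of_int b - of_int a * of_int u = (of_int a :: 'a) * (1 - of_int u * of_int b) / of_int b"
      using B0 by (simp add: field_simps)
    also have "(1 - of_int u * of_int b) = (of_int v * of_int P :: 'a)" using uvK by (simp add: algebra_simps)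
    finally show ?thesis by (simp add: mult.assoc)
  qed
  have nP: "nv (of_int P :: 'a) = (1 / real p) ^ N" unfolding P_def using nv_pN[of N] by simp
  have "nv (of_int a * of_int v * of_int P / of_int b :: 'a) = nv (of_int a :: 'a) * nv (of_int v :: 'a) * nv (of_int P :: 'a)"
    using nv_divide[OF B0] nb1 nv_mult by simp
  also have "\<dots> \<le> (1 / real p) ^ N" unfolding nP
    using nv_int_le1[of a] nv_int_le1[of v] nv_nonneg[of "of_int a"] nv_nonneg[of "of_int v"]
    by (intro mult_left_le_one_le mult_le_one mult_nonneg_nonneg) auto
  finally have t1: "nv (of_int a * of_int v * of_int P / of_int b :: 'a) \<le> (1 / real p) ^ N" .
  have "nv (of_int P * of_int w :: 'a) = (1 / real p) ^ N * nv (of_int w :: 'a)" using nv_mult nP by simp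
  also have "\<dots> \<le> (1 / real p) ^ N" using nv_int_le1[of w] nv_nonneg[of "of_int w"]
    by (simp add: mult_left_le_one_le mult.commute mult_right_le_one_le)
  finally have t2: "nv (of_int P * of_int w :: 'a) \<le> (1 / real p) ^ N" .
  have "nv ((of_rat q :: 'a) - of_nat k) \<le> 2 * (1 / real p) ^ N"
    unfolding diff using nv_tri[of "of_int a * of_int v * of_int P / of_int b" "of_int P * of_int w"] t1 t2 by simp
  then have "nv ((of_nat k :: 'a) - of_rat q) < e / 2" using N nv_sym by simp
  then have "nv ((of_nat k :: 'a) - x) < e"
    using nv_tri[of "of_nat k - of_rat q" "of_rat q - x"] q by simp
  then show ?thesis by blast
qed

lemma nv_nat_le1: "nv (of_nat k) \<le> 1"
  using nv_int_le1[of "int k"] by simp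

lemma qf_cont:
  assumes x: "\<forall>i<n. nv (x i) \<le> 1" and y: "\<forall>i<n. nv (y i) \<le> 1"
    and d: "\<forall>i<n. nv (y i - x i) \<le> d"
  shows "nv (qf_eval n c y - qf_eval n c x) \<le> 2 * d * (\<Sum>i<n. \<Sum>j\<in>{i..<n}. nv (c i j))"
proof -
  have eq: "qf_eval n c y - qf_eval n c x = (\<Sum>i<n. \<Sum>j\<in>{i..<n}. c i j * (y i * y j - x i * x j))"
    unfolding qf_eval_def by (simp add: sum_subtractf[symmetric] algebra_simps)
  have tm: "nv (c i j * (y i * y j - x i * x j)) \<le> nv (c i j) * (2 * d)" if "i < n" "j < n" for i j
  proof -
    have "0 \<le> d" using d that(1) nv_nonneg[of "y i - x i"] by force
    have "y i * y j - x i * x j = (y i - x i) * y j + x i * (y j - x j)" by (simp add: algebra_simps)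
    then have "nv (y i * y j - x i * x j) \<le> nv (y i - x i) * nv (y j) + nv (x i) * nv (y j - x j)"
      using nv_tri nv_mult by metis
    also have "\<dots> \<le> d * 1 + 1 * d"
      using that x y d nv_nonneg \<open>0 \<le> d\<close>
      by (intro add_mono mult_mono) auto
    finally have "nv (y i * y j - x i * x j) \<le> 2 * d" by simp
    then show ?thesis using nv_mult nv_nonneg by (simp add: mult_left_mono)
  qed
  have "nv (qf_eval n c y - qf_eval n c x) \<le> (\<Sum>i<n. nv (\<Sum>j\<in>{i..<n}. c i j * (y i * y j - x i * x j)))"
    unfolding eq by (rule nv_sum)
  also have "\<dots> \<le> (\<Sum>i<n. \<Sum>j\<in>{i..<n}. nv (c i j * (y i * y j - x i * x j)))"
    by (intro sum_mono nv_sum)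
  also have "\<dots> \<le> (\<Sum>i<n. \<Sum>j\<in>{i..<n}. nv (c i j) * (2 * d))"
    by (intro sum_mono tm) auto
  also have "\<dots> = 2 * d * (\<Sum>i<n. \<Sum>j\<in>{i..<n}. nv (c i j))"
    by (simp add: sum_distrib_left sum_distrib_right mult.commute)
  finally show ?thesis .
qed

lemma ratio_approx:
  assumes b: "b \<noteq> 0" and e: "e > 0"
  shows "\<exists>d>0. \<forall>a' b'. nv (a' - a) < d \<longrightarrow> nv (b' - b) < d \<longrightarrow> b' \<noteq> 0 \<and> nv (a' / b' - a / b) < e"
proof -
  define nb where "nb = nv b"
  define na where "na = nv a"
  have nb: "nb > 0" unfolding nb_def using b nv_nonneg nv_zero_iff by (metis less_eq_real_def)
  have na: "na \<ge> 0" unfolding na_def by (rule nv_nonneg)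
  define d where "d = min (nb / 2) (e * nb^2 / (4 * (na + nb)))"
  have d0: "d > 0" unfolding d_def using nb na e by simp
  have "\<forall>a' b'. nv (a' - a) < d \<longrightarrow> nv (b' - b) < d \<longrightarrow> b' \<noteq> 0 \<and> nv (a' / b' - a / b) < e"
  proof (intro allI impI)
    fix a' b' assume ha: "nv (a' - a) < d" and hb: "nv (b' - b) < d"
    have "nv b \<le> nv (b - b') + nv b'" using nv_tri[of "b - b'" b'] by simp
    then have nb': "nv b' > nb / 2" using hb nv_sym[of b b'] unfolding nb_def d_def by simp
    then have b': "b' \<noteq> 0" using nv_0 nb by auto
    have "a' / b' - a / b = ((a' - a) * b - a * (b' - b)) / (b' * b)"
      using b b' by (simp add: field_simps)
    then have "nv (a' / b' - a / b) = nv ((a' - a) * b - a * (b' - b)) / (nv b' * nb)"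
      using nv_divide[of "b' * b"] nv_mult b b' unfolding nb_def by simp
    also have "\<dots> \<le> (d * nb + na * d) / (nv b' * nb)"
    proof (rule divide_right_mono)
      have "nv ((a' - a) * b - a * (b' - b)) \<le> nv (a' - a) * nb + na * nv (b' - b)"
        using nv_diff nv_mult unfolding na_def nb_def by metis
      also have "\<dots> \<le> d * nb + na * d"
        using ha hb nb na d0 by (intro add_mono mult_mono) (auto simp: nv_nonneg less_imp_le)
      finally show "nv ((a' - a) * b - a * (b' - b)) \<le> d * nb + na * d" .
      show "0 \<le> nv b' * nb" using nv_nonneg nb by simp
    qed
    also have "\<dots> \<le> (d * nb + na * d) / (nb / 2 * nb)"
      using nb nb' na d0 by (intro divide_left_mono mult_right_mono) auto
    also have "\<dots> = 2 * d * (na + nb) / nb^2"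
      using nb by (simp add: field_simps power2_eq_square)
    also have "\<dots> \<le> 2 * (e * nb^2 / (4 * (na + nb))) * (na + nb) / nb^2"
      using nb na by (intro divide_right_mono mult_right_mono mult_left_mono) (auto simp: d_def)
    also have "\<dots> = e / 2"
    proof -
      have "\<And>K. K > 0 \<Longrightarrow> 2 * (e * nb^2 / (4 * K)) * K / nb^2 = e / 2"
        using nb by (simp add: field_simps power2_eq_square)
      moreover have "na + nb > 0" using na nb by simp
      ultimately show ?thesis by blast
    qed
    also have "\<dots> < e" using e by simp
    finally show "b' \<noteq> 0 \<and> nv (a' / b' - a / b) < e" using b' by simp
  qed
  then show ?thesis using d0 by blast
qed

lemma approx_vec:
  assumes w: "w \<in> cart_pow {x. nv x \<le> 1} n" and d: "d > 0"
  shows "\<exists>w'\<in>cart_pow (range of_nat) n.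
           nv (qf_eval n c w' - qf_eval n c w) \<le> 2 * d * (\<Sum>i<n. \<Sum>j\<in>{i..<n}. nv (c i j))"
proof -
  have "\<forall>i. \<exists>k::nat. i < n \<longrightarrow> nv (of_nat k - w i) < d"
    using nat_dense d w unfolding cart_pow_def by auto
  then obtain K where K: "\<And>i. i < n \<Longrightarrow> nv (of_nat (K i) - w i) < d" by metis
  define w' where "w' = (\<lambda>i. (of_nat (K i) :: 'a))"
  have "w' \<in> cart_pow (range of_nat) n" unfolding w'_def cart_pow_def by auto
  moreover have "nv (qf_eval n c w' - qf_eval n c w) \<le> 2 * d * (\<Sum>i<n. \<Sum>j\<in>{i..<n}. nv (c i j))"
    by (rule qf_cont) (use w K in \<open>auto simp: cart_pow_def w'_def nv_nat_le1 less_imp_le\<close>)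
  ultimately show ?thesis by blast
qed

lemma key:
  assumes D: "dense_wrt nv (ratio_set (qf_eval n c ` cart_pow {x. nv x \<le> 1} n))"
  shows "dense_wrt nv (ratio_set (qf_eval n c ` cart_pow (range of_nat) n))"
  unfolding dense_wrt_def
proof (intro allI impI)
  fix y :: 'a and e :: real assume e: "e > 0"
  obtain s where s: "s \<in> ratio_set (qf_eval n c ` cart_pow {x. nv x \<le> 1} n)" "nv (s - y) < e/2"
    using D e unfolding dense_wrt_def by (meson half_gt_zero)
  then obtain x z where xz: "s = qf_eval n c x / qf_eval n c z" "x \<in> cart_pow {x. nv x \<le> 1} n"
    "z \<in> cart_pow {x. nv x \<le> 1} n" "qf_eval n c z \<noteq> 0"
    unfolding ratio_set_def by auto
  obtain dl where dl: "dl > 0" "\<forall>a' b'. nv (a' - qf_eval n c x) < dl \<longrightarrow> nv (b' - qf_eval n c z) < dl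
      \<longrightarrow> b' \<noteq> 0 \<and> nv (a' / b' - qf_eval n c x / qf_eval n c z) < e/2"
    using ratio_approx[of "qf_eval n c z" "e/2" "qf_eval n c x"] xz e by auto
  define C where "C = (\<Sum>i<n. \<Sum>j\<in>{i..<n}. nv (c i j))"
  have C0: "C \<ge> 0" unfolding C_def by (intro sum_nonneg) (simp add: nv_nonneg)
  define d where "d = dl / (2 * C + 1)"
  have d0: "d > 0" unfolding d_def using dl C0 by simp
  have "d * (2 * C + 1) = dl" unfolding d_def using C0 by simp
  then have dC: "2 * d * C < dl" using d0 by (simp add: algebra_simps)
  obtain x' where x': "x' \<in> cart_pow (range of_nat) n" "nv (qf_eval n c x' - qf_eval n c x) < dl"
    using approx_vec[OF xz(2) d0, of c] dC unfolding C_def by force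
  obtain z' where z': "z' \<in> cart_pow (range of_nat) n" "nv (qf_eval n c z' - qf_eval n c z) < dl"
    using approx_vec[OF xz(3) d0, of c] dC unfolding C_def by force
  have r: "qf_eval n c z' \<noteq> 0" "nv (qf_eval n c x' / qf_eval n c z' - s) < e/2"
    using dl(2) x'(2) z'(2) xz(1) by auto
  have mem: "qf_eval n c x' / qf_eval n c z' \<in> ratio_set (qf_eval n c ` cart_pow (range of_nat) n)"
    unfolding ratio_set_def using x'(1) z'(1) r(1) by blast
  have "nv (qf_eval n c x' / qf_eval n c z' - y) \<le> nv (qf_eval n c x' / qf_eval n c z' - s) + nv (s - y)"
    using nv_tri[of "qf_eval n c x' / qf_eval n c z' - s" "s - y"] by simp
  then have "nv (qf_eval n c x' / qf_eval n c z' - y) < e" using r(2) s(2) by simp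
  then show "\<exists>s\<in>ratio_set (qf_eval n c ` cart_pow (range of_nat) n). nv (s - y) < e"
    using mem by blast
qed

lemma dense_mono: "S \<subseteq> T \<Longrightarrow> dense_wrt nv S \<Longrightarrow> dense_wrt nv T"
  unfolding dense_wrt_def by blast

lemma ratio_mono: "A \<subseteq> B \<Longrightarrow> ratio_set A \<subseteq> ratio_set B"
  unfolding ratio_set_def by blast

lemma cart_mono: "A \<subseteq> B \<Longrightarrow> cart_pow A n \<subseteq> cart_pow B n"
  unfolding cart_pow_def by blast

lemma chain:
  "ratio_set (qf_eval n c ` cart_pow (range of_nat) n) \<subseteq> ratio_set (qf_eval n c ` cart_pow \<int> n)"
  "ratio_set (qf_eval n c ` cart_pow \<int> n) \<subseteq> ratio_set (qf_eval n c ` cart_pow {x. nv x \<le> 1} n)"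
proof -
  have "range (of_nat :: nat \<Rightarrow> 'a) \<subseteq> \<int>" by (auto intro: Ints_of_nat)
  then show "ratio_set (qf_eval n c ` cart_pow (range of_nat) n) \<subseteq> ratio_set (qf_eval n c ` cart_pow \<int> n)"
    by (intro ratio_mono image_mono cart_mono)
  have "(\<int> :: 'a set) \<subseteq> {x. nv x \<le> 1}" by (auto elim!: Ints_cases simp: nv_int_le1)
  then show "ratio_set (qf_eval n c ` cart_pow \<int> n) \<subseteq> ratio_set (qf_eval n c ` cart_pow {x. nv x \<le> 1} n)"
    by (intro ratio_mono image_mono cart_mono)
qed

lemma main:
  shows "(dense_wrt nv (ratio_set (qf_eval n c ` cart_pow (range of_nat) n))
            \<longleftrightarrow> dense_wrt nv (ratio_set (qf_eval n c ` cart_pow \<int> n)))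
       \<and> (dense_wrt nv (ratio_set (qf_eval n c ` cart_pow \<int> n))
            \<longleftrightarrow> dense_wrt nv (ratio_set (qf_eval n c ` cart_pow {x. nv x \<le> 1} n)))"
  using key[of n c] chain[of n c] dense_mono by blast

end

theorem lemma1:
  fixes p :: nat and nv :: "'a::field_char_0 \<Rightarrow> real"
    and n :: nat and c :: "nat \<Rightarrow> nat \<Rightarrow> 'a"
  assumes "prime p" and "is_Qp p nv" and "is_quadratic_form n c"
  shows "(dense_wrt nv (ratio_set (qf_eval n c ` cart_pow (range of_nat) n))
            \<longleftrightarrow> dense_wrt nv (ratio_set (qf_eval n c ` cart_pow \<int> n)))
       \<and> (dense_wrt nv (ratio_set (qf_eval n c ` cart_pow \<int> n))
            \<longleftrightarrow> dense_wrt nv (ratio_set (qf_eval n c ` cart_pow {x. nv x \<le> 1} n)))"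
  by (rule main[OF assms(2) assms(1)])

end
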